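(* Let $(H,B_1,B_2)$ be a Rota-Baxter system of Hopf algebras with cocycle $\sigma$. Then $B_1\circ\sigma=B_1$ and $B_2\circ\sigma=B_2$. Furthermore, $\sigma$ is idempotent and is a coalgebra homomorphism.
   Context: $\mathbb{F}$ is a field of characteristic $0$; Sweedler notation $\Delta(a)=a_1\otimes a_2$. A coalgebra homomorphism $f$ satisfies $\Delta(f(a))=f(a_1)\otimes f(a_2)$, $\epsilon(f(a))=\epsilon(a)$. A Rota-Baxter system of Hopf algebras is a triple $(H,B_1,B_2)$ where $(H,\cdot,1,\Delta,\epsilon,S)$ is a cocommutative Hopf algebra and $B_1,B_2:H\to H$ are coalgebra homomorphisms with $B_1(1)=B_2(1)=1$ such that for all $a,b\in H$: $B_1(a)B_1(b)=B_1(B_1(a_1)bS(B_2(a_2)))$ and $B_2(a)B_2(b)=B_2(B_1(a_1)bS(B_2(a_2)))$. Its cocycle is $\sigma:H\to H$, $\sigma(a)=B_1(a_1)S(B_2(a_2))$. *)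

theory Defs
  imports Complex_Main
begin

text \<open>H is a type 'h with a ring structure (ring_1) and a scalar
multiplication sc :: 'f \<Rightarrow> 'h \<Rightarrow> 'h over a field 'f of characteristic 0
making it an associative unital 'f-algebra.  The comultiplication is given by a
representative  Delta a = [(x_1,y_1),...,(x_n,y_n)]  of the tensor
sum_i x_i (x) y_i  (scalars absorbed into x_i).  Sweedler sums
f(a_1,a_2) for bilinear f are  sw Delta a f = sum_i f x_i y_i.
Equality of elements of H (x) H (resp. H (x) H (x) H) is expressed by testing
against all 'f-valued bilinear (resp. trilinear) forms; this is exact since
the algebraic dual of a vector space separates points.\<close>

definition sw :: "('h \<Rightarrow> ('h \<times> 'h) list) \<Rightarrow> 'h \<Rightarrow> ('h \<Rightarrow> 'h \<Rightarrow> 'b::comm_monoid_add) \<Rightarrow> 'b" where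
  "sw Delta a f = (\<Sum>(x, y)\<leftarrow>Delta a. f x y)"

definition f_algebra :: "('f::field \<Rightarrow> 'h::ring_1 \<Rightarrow> 'h) \<Rightarrow> bool" where
  "f_algebra sc \<longleftrightarrow> Vector_Spaces.vector_space sc \<and>
     (\<forall>c a b. sc c (a * b) = sc c a * b \<and> sc c (a * b) = a * sc c b)"

definition bilin :: "('f::field \<Rightarrow> 'h::ring_1 \<Rightarrow> 'h) \<Rightarrow> ('h \<Rightarrow> 'h \<Rightarrow> 'f) \<Rightarrow> bool" where
  "bilin sc \<beta> \<longleftrightarrow> (\<forall>x. Vector_Spaces.linear sc (*) (\<beta> x)) \<and>
                    (\<forall>y. Vector_Spaces.linear sc (*) (\<lambda>x. \<beta> x y))"

definition trilin :: "('f::field \<Rightarrow> 'h::ring_1 \<Rightarrow> 'h) \<Rightarrow> ('h \<Rightarrow> 'h \<Rightarrow> 'h \<Rightarrow> 'f) \<Rightarrow> bool" where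
  "trilin sc \<tau> \<longleftrightarrow> (\<forall>x y. Vector_Spaces.linear sc (*) (\<tau> x y)) \<and>
                    (\<forall>x z. Vector_Spaces.linear sc (*) (\<lambda>y. \<tau> x y z)) \<and>
                    (\<forall>y z. Vector_Spaces.linear sc (*) (\<lambda>x. \<tau> x y z))"

definition cocomm_hopf ::
  "('f::field \<Rightarrow> 'h::ring_1 \<Rightarrow> 'h) \<Rightarrow> ('h \<Rightarrow> ('h \<times> 'h) list) \<Rightarrow> ('h \<Rightarrow> 'f) \<Rightarrow> ('h \<Rightarrow> 'h) \<Rightarrow> bool" where
  "cocomm_hopf sc Delta eps S \<longleftrightarrow>
     f_algebra sc \<and>
     \<comment> \<open>Delta is linear\<close>
     (\<forall>\<beta>. bilin sc \<beta> \<longrightarrow> (\<forall>a b c d. sw Delta (sc c a + sc d b) \<beta> = c * sw Delta a \<beta> + d * sw Delta b \<beta>)) \<and>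
     \<comment> \<open>coassociativity\<close>
     (\<forall>\<tau>. trilin sc \<tau> \<longrightarrow> (\<forall>a. sw Delta a (\<lambda>x y. sw Delta x (\<lambda>u v. \<tau> u v y))
                                 = sw Delta a (\<lambda>x y. sw Delta y (\<lambda>u v. \<tau> x u v)))) \<and>
     \<comment> \<open>counit\<close>
     Vector_Spaces.linear sc (*) eps \<and>
     (\<forall>a. sw Delta a (\<lambda>x y. sc (eps x) y) = a \<and> sw Delta a (\<lambda>x y. sc (eps y) x) = a) \<and>
     \<comment> \<open>cocommutativity\<close>
     (\<forall>\<beta>. bilin sc \<beta> \<longrightarrow> (\<forall>a. sw Delta a \<beta> = sw Delta a (\<lambda>x y. \<beta> y x))) \<and>
     \<comment> \<open>Delta and eps are unital algebra maps\<close>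
     (\<forall>\<beta>. bilin sc \<beta> \<longrightarrow> (\<forall>a b. sw Delta (a * b) \<beta> = sw Delta a (\<lambda>x y. sw Delta b (\<lambda>u v. \<beta> (x * u) (y * v))))) \<and>
     (\<forall>\<beta>. bilin sc \<beta> \<longrightarrow> sw Delta 1 \<beta> = \<beta> 1 1) \<and>
     (\<forall>a b. eps (a * b) = eps a * eps b) \<and> eps 1 = 1 \<and>
     \<comment> \<open>antipode\<close>
     Vector_Spaces.linear sc sc S \<and>
     (\<forall>a. sw Delta a (\<lambda>x y. S x * y) = sc (eps a) 1 \<and> sw Delta a (\<lambda>x y. x * S y) = sc (eps a) 1)"

definition coalg_hom ::
  "('f::field \<Rightarrow> 'h::ring_1 \<Rightarrow> 'h) \<Rightarrow> ('h \<Rightarrow> ('h \<times> 'h) list) \<Rightarrow> ('h \<Rightarrow> 'f) \<Rightarrow> ('h \<Rightarrow> 'h) \<Rightarrow> bool" where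
  "coalg_hom sc Delta eps f \<longleftrightarrow>
     Vector_Spaces.linear sc sc f \<and>
     (\<forall>\<beta>. bilin sc \<beta> \<longrightarrow> (\<forall>a. sw Delta (f a) \<beta> = sw Delta a (\<lambda>x y. \<beta> (f x) (f y)))) \<and>
     (\<forall>a. eps (f a) = eps a)"

definition rota_baxter_system ::
  "('f::field \<Rightarrow> 'h::ring_1 \<Rightarrow> 'h) \<Rightarrow> ('h \<Rightarrow> ('h \<times> 'h) list) \<Rightarrow> ('h \<Rightarrow> 'f) \<Rightarrow> ('h \<Rightarrow> 'h)
     \<Rightarrow> ('h \<Rightarrow> 'h) \<Rightarrow> ('h \<Rightarrow> 'h) \<Rightarrow> bool" where
  "rota_baxter_system sc Delta eps S B1 B2 \<longleftrightarrow>
     cocomm_hopf sc Delta eps S \<and>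
     coalg_hom sc Delta eps B1 \<and> coalg_hom sc Delta eps B2 \<and> B1 1 = 1 \<and> B2 1 = 1 \<and>
     (\<forall>a b. B1 a * B1 b = B1 (sw Delta a (\<lambda>x y. B1 x * b * S (B2 y)))) \<and>
     (\<forall>a b. B2 a * B2 b = B2 (sw Delta a (\<lambda>x y. B1 x * b * S (B2 y))))"

definition rbs_cocycle ::
  "('h::ring_1 \<Rightarrow> ('h \<times> 'h) list) \<Rightarrow> ('h \<Rightarrow> 'h) \<Rightarrow> ('h \<Rightarrow> 'h) \<Rightarrow> ('h \<Rightarrow> 'h) \<Rightarrow> 'h \<Rightarrow> 'h" where
  "rbs_cocycle Delta S B1 B2 a = sw Delta a (\<lambda>x y. B1 x * S (B2 y))"

end

theory Submission
  imports Defs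
begin

lemma sw_add_fun: "sw D a (\<lambda>x y. f x y + g x y) = sw D a f + sw D a g"
proof -
  have "\<And>xs. (\<Sum>(x, y)\<leftarrow>xs. f x y + g x y) = (\<Sum>(x, y)\<leftarrow>xs. f x y) + (\<Sum>(x, y)\<leftarrow>xs. g x y)"
    subgoal for xs by (induct xs) (auto simp: algebra_simps)
    done
  then show ?thesis unfolding sw_def by simp
qed

lemma sw_zero_fun: "sw D a (\<lambda>x y. 0) = (0::'b::comm_monoid_add)"
proof -
  have "\<And>xs. (\<Sum>(x, y)\<leftarrow>xs. 0) = (0::'b)"
    subgoal for xs by (induct xs) auto
    done
  then show ?thesis unfolding sw_def .
qed

lemma sw_cmult: "sw D a (\<lambda>x y. (c::'a::semiring_0) * f x y) = c * sw D a f"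
proof -
  have "\<And>xs. (\<Sum>(x, y)\<leftarrow>xs. c * f x y) = c * (\<Sum>(x, y)\<leftarrow>xs. f x y)"
    subgoal for xs by (induct xs) (auto simp: algebra_simps)
    done
  then show ?thesis unfolding sw_def by simp
qed

lemma sw_multc: "sw D a (\<lambda>x y. f x y * (c::'a::semiring_0)) = sw D a f * c"
proof -
  have "\<And>xs. (\<Sum>(x, y)\<leftarrow>xs. f x y * c) = (\<Sum>(x, y)\<leftarrow>xs. f x y) * c"
    subgoal for xs by (induct xs) (auto simp: algebra_simps)
    done
  then show ?thesis unfolding sw_def by simp
qed

lemma sw_push:
  assumes "\<And>x y. L (x + y) = L x + L y" "L 0 = 0"
  shows "L (sw D a f) = sw D a (\<lambda>x y. L (f x y))"
proof -
  have "\<And>xs. L (\<Sum>(x, y)\<leftarrow>xs. f x y) = (\<Sum>(x, y)\<leftarrow>xs. L (f x y))"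
    subgoal for xs by (induct xs) (auto simp: assms)
    done
  then show ?thesis unfolding sw_def by simp
qed

lemma sw_swap: "sw D a (\<lambda>x y. sw E b (\<lambda>u v. F x y u v)) = sw E b (\<lambda>u v. sw D a (\<lambda>x y. F x y u v))"
proof -
  have "\<And>xs. (\<Sum>(x, y)\<leftarrow>xs. sw E b (\<lambda>u v. F x y u v)) = sw E b (\<lambda>u v. \<Sum>(x, y)\<leftarrow>xs. F x y u v)"
    subgoal for xs by (induct xs) (auto simp: sw_add_fun sw_zero_fun)
    done
  then show ?thesis unfolding sw_def[of D] by simp
qed


lemma vs_field: "Vector_Spaces.vector_space ((*) :: 'f::field \<Rightarrow> 'f \<Rightarrow> 'f)"
  by (unfold_locales) (auto simp: algebra_simps)

locale hopf =
  fixes sc :: "'f::field \<Rightarrow> 'h::ring_1 \<Rightarrow> 'h" and Delta :: "'h \<Rightarrow> ('h \<times> 'h) list"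
    and eps :: "'h \<Rightarrow> 'f" and S :: "'h \<Rightarrow> 'h"
  assumes H: "cocomm_hopf sc Delta eps S"
begin

abbreviation lin :: "('h \<Rightarrow> 'f) \<Rightarrow> bool" where "lin \<equiv> Vector_Spaces.linear sc (*)"
abbreviation linH :: "('h \<Rightarrow> 'h) \<Rightarrow> bool" where "linH \<equiv> Vector_Spaces.linear sc sc"

lemma VS: "Vector_Spaces.vector_space sc"
  using H unfolding cocomm_hopf_def f_algebra_def by blast

lemma sc_mult1: "sc c (a * b) = sc c a * b" and sc_mult2: "sc c (a * b) = a * sc c b"
  using H unfolding cocomm_hopf_def f_algebra_def by blast+

lemma sc_one: "sc 1 x = x" using VS by (simp add: vector_space.vector_space_assms(4))
lemma sc_add: "sc c (x + y) = sc c x + sc c y" using VS by (simp add: vector_space.vector_space_assms(1))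
lemma sc_addl: "sc (c + d) x = sc c x + sc d x" using VS by (simp add: vector_space.vector_space_assms(2))
lemma sc_sc: "sc c (sc d x) = sc (c * d) x" using VS by (simp add: vector_space.vector_space_assms(3))
lemma sc_zero: "sc 0 x = 0" using sc_addl[of 0 0 x] by simp
lemma sc_zero2: "sc c 0 = 0" using sc_add[of c 0 0] by simp

lemma Dlin: "bilin sc \<beta> \<Longrightarrow> sw Delta (sc c a + sc d b) \<beta> = c * sw Delta a \<beta> + d * sw Delta b \<beta>"
  using H unfolding cocomm_hopf_def by blast

lemma coassoc: "trilin sc \<tau> \<Longrightarrow> sw Delta a (\<lambda>x y. sw Delta x (\<lambda>u v. \<tau> u v y))
                                 = sw Delta a (\<lambda>x y. sw Delta y (\<lambda>u v. \<tau> x u v))"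
  using H unfolding cocomm_hopf_def by blast

lemma eps_lin: "lin eps" using H unfolding cocomm_hopf_def by blast

lemma counit1: "sw Delta a (\<lambda>x y. sc (eps x) y) = a"
  and counit2: "sw Delta a (\<lambda>x y. sc (eps y) x) = a"
  using H unfolding cocomm_hopf_def by blast+

lemma cocomm: "bilin sc \<beta> \<Longrightarrow> sw Delta a \<beta> = sw Delta a (\<lambda>x y. \<beta> y x)"
  using H unfolding cocomm_hopf_def by blast

lemma Dmult: "bilin sc \<beta> \<Longrightarrow> sw Delta (a * b) \<beta> = sw Delta a (\<lambda>x y. sw Delta b (\<lambda>u v. \<beta> (x * u) (y * v)))"
  using H unfolding cocomm_hopf_def by blast

lemma Done: "bilin sc \<beta> \<Longrightarrow> sw Delta 1 \<beta> = \<beta> 1 1"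
  using H unfolding cocomm_hopf_def by blast

lemma eps_mult: "eps (a * b) = eps a * eps b" and eps_one: "eps 1 = 1"
  using H unfolding cocomm_hopf_def by blast+

lemma S_lin: "linH S" using H unfolding cocomm_hopf_def by blast

lemma antipode1: "sw Delta a (\<lambda>x y. S x * y) = sc (eps a) 1"
  and antipode2: "sw Delta a (\<lambda>x y. x * S y) = sc (eps a) 1"
  using H unfolding cocomm_hopf_def by blast+

lemma linD: "lin \<phi> \<Longrightarrow> \<phi> (x + y) = \<phi> x + \<phi> y" "lin \<phi> \<Longrightarrow> \<phi> (sc c x) = c * \<phi> x"
  "lin \<phi> \<Longrightarrow> \<phi> 0 = 0"
  by (auto simp: Vector_Spaces.linear_iff) (metis sc_zero mult_zero_left)

lemma linHD: "linH \<phi> \<Longrightarrow> \<phi> (x + y) = \<phi> x + \<phi> y" "linH \<phi> \<Longrightarrow> \<phi> (sc c x) = sc c (\<phi> x)"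
  "linH \<phi> \<Longrightarrow> \<phi> 0 = 0"
  by (auto simp: Vector_Spaces.linear_iff) (metis sc_zero)

lemma linI: "(\<And>x y. \<phi> (x + y) = \<phi> x + \<phi> y) \<Longrightarrow> (\<And>c x. \<phi> (sc c x) = c * \<phi> x) \<Longrightarrow> lin \<phi>"
  by (simp add: Vector_Spaces.linear_iff VS vs_field)

lemma linHI: "(\<And>x y. \<phi> (x + y) = \<phi> x + \<phi> y) \<Longrightarrow> (\<And>c x. \<phi> (sc c x) = sc c (\<phi> x)) \<Longrightarrow> linH \<phi>"
  by (simp add: Vector_Spaces.linear_iff VS)

lemma bilinI: "(\<And>u. lin (\<beta> u)) \<Longrightarrow> (\<And>v. lin (\<lambda>u. \<beta> u v)) \<Longrightarrow> bilin sc \<beta>"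
  by (simp add: bilin_def)

lemma trilinI: "(\<And>x y. lin (\<tau> x y)) \<Longrightarrow> (\<And>x z. lin (\<lambda>y. \<tau> x y z)) \<Longrightarrow> (\<And>y z. lin (\<lambda>x. \<tau> x y z)) \<Longrightarrow> trilin sc \<tau>"
  by (simp add: trilin_def)

lemma bilinD: "bilin sc \<beta> \<Longrightarrow> lin (\<beta> u)" "bilin sc \<beta> \<Longrightarrow> lin (\<lambda>u. \<beta> u v)"
  by (auto simp: bilin_def)

lemma Dadd: "bilin sc \<beta> \<Longrightarrow> sw Delta (a + b) \<beta> = sw Delta a \<beta> + sw Delta b \<beta>"
  using Dlin[of \<beta> 1 a 1 b] by (simp add: sc_one)

lemma Dscale: "bilin sc \<beta> \<Longrightarrow> sw Delta (sc c a) \<beta> = c * sw Delta a \<beta>"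
  using Dlin[of \<beta> c a 0 a] by (simp add: sc_zero)

lemma lin_D: "linH L \<Longrightarrow> (\<And>u. lin (\<beta> u)) \<Longrightarrow> (\<And>v. lin (\<lambda>u. \<beta> u v)) \<Longrightarrow> lin (\<lambda>x. sw Delta (L x) \<beta>)"
  apply (rule linI)
  using bilinI[of \<beta>] by (auto simp: linHD Dadd Dscale)

lemma lin_sum: assumes "\<And>u v. lin (\<lambda>x. F x u v)" shows "lin (\<lambda>x. sw Delta a (F x))"
proof (rule linI)
  fix x y
  have "F (x + y) = (\<lambda>u v. F x u v + F y u v)" using linD(1)[OF assms] by (intro ext) auto
  then show "sw Delta a (F (x + y)) = sw Delta a (F x) + sw Delta a (F y)" by (simp add: sw_add_fun)
next
  fix c x
  have "F (sc c x) = (\<lambda>u v. c * F x u v)" using linD(2)[OF assms] by (intro ext) auto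
  then show "sw Delta a (F (sc c x)) = c * sw Delta a (F x)" by (simp add: sw_cmult)
qed

lemma lin_cmult: "lin \<phi> \<Longrightarrow> lin (\<lambda>x. c * \<phi> x)"
  by (rule linI) (auto simp: linD algebra_simps)

lemma lin_multc: "lin \<phi> \<Longrightarrow> lin (\<lambda>x. \<phi> x * c)"
  by (rule linI) (auto simp: linD algebra_simps)

lemma lin_comp: "lin \<phi> \<Longrightarrow> linH L \<Longrightarrow> lin (\<lambda>x. \<phi> (L x))"
  by (rule linI) (auto simp: linD linHD)

lemma lin_bil1: "bilin sc \<gamma> \<Longrightarrow> linH L \<Longrightarrow> lin (\<lambda>x. \<gamma> (L x) c)"
  using lin_comp[of "\<lambda>u. \<gamma> u c" L] bilinD by blast

lemma lin_bil2: "bilin sc \<gamma> \<Longrightarrow> linH L \<Longrightarrow> lin (\<lambda>x. \<gamma> c (L x))"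
  using lin_comp[of "\<gamma> c" L] bilinD by blast

lemma lin_eps: "linH L \<Longrightarrow> lin (\<lambda>x. eps (L x))"
  using lin_comp eps_lin by blast

lemma linH_id: "linH (\<lambda>x. x)"
  by (rule linHI) auto

lemma linH_multc: "linH L \<Longrightarrow> linH (\<lambda>x. L x * c)"
  by (rule linHI) (auto simp: linHD distrib_right sc_mult1)

lemma linH_cmult: "linH L \<Longrightarrow> linH (\<lambda>x. c * L x)"
  by (rule linHI) (auto simp: linHD distrib_left sc_mult2)

lemma linH_S: "linH L \<Longrightarrow> linH (\<lambda>x. S (L x))"
  by (rule linHI) (auto simp: linHD S_lin)

lemmas linH_intros = linH_id linH_multc linH_cmult linH_S
lemmas lin_intros = lin_D lin_sum lin_cmult lin_multc lin_eps linH_intros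


lemma M4:
  assumes F1: "\<And>q u v. lin (\<lambda>p. F p q u v)" and F2: "\<And>p u v. lin (\<lambda>q. F p q u v)"
    and F3: "\<And>p q v. lin (\<lambda>u. F p q u v)" and F4: "\<And>p q u. lin (\<lambda>v. F p q u v)"
  shows "sw Delta a (\<lambda>x y. sw Delta x (\<lambda>p q. sw Delta y (\<lambda>u v. F p q u v)))
       = sw Delta a (\<lambda>x y. sw Delta x (\<lambda>p q. sw Delta y (\<lambda>u v. F p u q v)))"
proof -
  have s1: "sw Delta a (\<lambda>x y. sw Delta x (\<lambda>p q. sw Delta y (\<lambda>u v. F p q u v)))
      = sw Delta a (\<lambda>x y. sw Delta y (\<lambda>q w. sw Delta w (\<lambda>u v. F x q u v)))"
    by (rule coassoc[of "\<lambda>p q y. sw Delta y (\<lambda>u v. F p q u v)"], rule trilinI)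
       (intro lin_intros F1 F2 F3 F4)+
  have s2: "sw Delta y (\<lambda>q w. sw Delta w (\<lambda>u v. F x q u v))
      = sw Delta y (\<lambda>q w. sw Delta w (\<lambda>u v. F x u q v))" for x y
  proof -
    have "sw Delta y (\<lambda>q w. sw Delta w (\<lambda>u v. F x q u v)) = sw Delta y (\<lambda>w v. sw Delta w (\<lambda>q u. F x q u v))"
      by (rule coassoc[of "\<lambda>q u v. F x q u v", symmetric], rule trilinI) (intro lin_intros F1 F2 F3 F4)+
    also have "\<dots> = sw Delta y (\<lambda>w v. sw Delta w (\<lambda>q u. F x u q v))"
      by (subst cocomm) (auto intro!: bilinI F2 F3)
    also have "\<dots> = sw Delta y (\<lambda>q w. sw Delta w (\<lambda>u v. F x u q v))"
      by (rule coassoc[of "\<lambda>q u v. F x u q v"], rule trilinI) (intro lin_intros F1 F2 F3 F4)+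
    finally show ?thesis .
  qed
  have s3: "sw Delta a (\<lambda>x y. sw Delta y (\<lambda>q w. sw Delta w (\<lambda>u v. F x u q v)))
     = sw Delta a (\<lambda>x y. sw Delta x (\<lambda>p q. sw Delta y (\<lambda>u v. F p u q v)))"
    by (rule coassoc[of "\<lambda>p q y. sw Delta y (\<lambda>u v. F p u q v)", symmetric], rule trilinI)
       (intro lin_intros F1 F2 F3 F4)+
  show ?thesis using s1 s2 s3 by simp
qed


lemma lin_push: "lin \<phi> \<Longrightarrow> \<phi> (sw D a f) = sw D a (\<lambda>x y. \<phi> (f x y))"
  by (rule sw_push) (auto simp: linD)

lemma linH_push: "linH \<phi> \<Longrightarrow> \<phi> (sw D a f) = sw D a (\<lambda>x y. \<phi> (f x y))"
  by (rule sw_push) (auto simp: linHD)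

lemma eps_sc: "eps (sc c x) = c * eps x" using linD(2)[OF eps_lin] .

lemma eps_sw_counit: "sw Delta y (\<lambda>p q. eps p * eps q) = eps y"
proof -
  have "eps y = eps (sw Delta y (\<lambda>p q. sc (eps p) q))" by (simp add: counit1)
  also have "\<dots> = sw Delta y (\<lambda>p q. eps p * eps q)" by (simp add: lin_push[OF eps_lin] eps_sc)
  finally show ?thesis by simp
qed

lemma E_lemma:
  assumes d: "bilin sc \<delta>"
  shows "sw Delta y (\<lambda>p q. sw Delta p (\<lambda>p1 p2. sw Delta q (\<lambda>q1 q2. \<delta> (p1 * S q1) (p2 * S q2))))
       = eps y * \<delta> 1 1"
proof -
  note li = lin_bil1[OF d] lin_bil2[OF d]
  have "sw Delta y (\<lambda>p q. sw Delta p (\<lambda>p1 p2. sw Delta q (\<lambda>q1 q2. \<delta> (p1 * S q1) (p2 * S q2))))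
     = sw Delta y (\<lambda>p q. sw Delta p (\<lambda>p1 p2. sw Delta q (\<lambda>q1 q2. \<delta> (p1 * S p2) (q1 * S q2))))"
    by (rule M4) (intro lin_intros li)+
  also have "\<dots> = sw Delta y (\<lambda>p q. eps p * eps q * \<delta> 1 1)"
  proof -
    have "sw Delta p (\<lambda>p1 p2. sw Delta q (\<lambda>q1 q2. \<delta> (p1 * S p2) (q1 * S q2))) = eps p * eps q * \<delta> 1 1" for p q
    proof -
      have "sw Delta p (\<lambda>p1 p2. sw Delta q (\<lambda>q1 q2. \<delta> (p1 * S p2) (q1 * S q2)))
          = sw Delta p (\<lambda>p1 p2. \<delta> (p1 * S p2) (sw Delta q (\<lambda>q1 q2. q1 * S q2)))"
        by (subst lin_push[OF bilinD(1)[OF d]]) simp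
      also have "\<dots> = \<delta> (sw Delta p (\<lambda>p1 p2. p1 * S p2)) (sw Delta q (\<lambda>q1 q2. q1 * S q2))"
        by (subst lin_push[OF bilinD(2)[OF d]]) simp
      also have "\<dots> = eps p * eps q * \<delta> 1 1"
        by (simp add: antipode2 linD(2)[OF bilinD(1)[OF d]] linD(2)[OF bilinD(2)[OF d]])
      finally show ?thesis .
    qed
    then show ?thesis by simp
  qed
  also have "\<dots> = eps y * \<delta> 1 1"
    by (simp add: sw_multc eps_sw_counit)
  finally show ?thesis .
qed


lemma DS:
  assumes g: "bilin sc \<gamma>"
  shows "sw Delta (S h) \<gamma> = sw Delta h (\<lambda>u v. \<gamma> (S u) (S v))"
proof -
  note li = lin_bil1[OF g] lin_bil2[OF g]
  define \<Phi> where "\<Phi> h = sw Delta (S h) \<gamma>" for h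
  define \<Psi> where "\<Psi> q = sw Delta q (\<lambda>q1 q2. \<gamma> (S q1) (S q2))" for q
  define G where "G x p q = sw Delta p (\<lambda>p1 p2. sw Delta q (\<lambda>q1 q2.
       sw Delta (S x) (\<lambda>m n. \<gamma> (m * (p1 * S q1)) (n * (p2 * S q2)))))" for x p q
  have linPhi: "lin \<Phi>" unfolding \<Phi>_def by (intro lin_intros li)
  have linPsi: "lin \<Psi>" unfolding \<Psi>_def by (intro lin_intros li)
  have st1: "\<Phi> h = sw Delta h (\<lambda>x y. eps y * \<Phi> x)"
  proof -
    have "\<Phi> h = \<Phi> (sw Delta h (\<lambda>x y. sc (eps y) x))" by (simp add: counit2)
    also have "\<dots> = sw Delta h (\<lambda>x y. eps y * \<Phi> x)" by (simp add: lin_push[OF linPhi] linD(2)[OF linPhi])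
    finally show ?thesis .
  qed
  have st2: "eps y * \<Phi> x = sw Delta y (\<lambda>p q. G x p q)" for x y
  proof -
    have bd: "bilin sc (\<lambda>s t. sw Delta (S x) (\<lambda>m n. \<gamma> (m * s) (n * t)))"
      by (intro bilinI lin_intros li)
    have "eps y * \<Phi> x = eps y * (\<lambda>s t. sw Delta (S x) (\<lambda>m n. \<gamma> (m * s) (n * t))) 1 1"
      by (simp add: \<Phi>_def)
    also have "\<dots> = sw Delta y (\<lambda>p q. G x p q)"
      unfolding G_def by (rule E_lemma[OF bd, symmetric])
    finally show ?thesis .
  qed
  have trG: "trilin sc G" unfolding G_def by (intro trilinI lin_intros li)
  have st3: "sw Delta h (\<lambda>x y. sw Delta y (\<lambda>p q. G x p q)) = sw Delta h (\<lambda>x y. sw Delta x (\<lambda>x1 p. G x1 p y))"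
    by (rule coassoc[OF trG, symmetric])
  have st4: "sw Delta x (\<lambda>x1 p. G x1 p q) = eps x * \<Psi> q" for x q
  proof -
    have "sw Delta x (\<lambda>x1 p. G x1 p q) = sw Delta x (\<lambda>x1 p. sw Delta q (\<lambda>q1 q2. sw Delta p (\<lambda>p1 p2.
       sw Delta (S x1) (\<lambda>m n. \<gamma> (m * (p1 * S q1)) (n * (p2 * S q2))))))"
      unfolding G_def by (subst sw_swap) (rule refl)
    also have "\<dots> = sw Delta q (\<lambda>q1 q2. sw Delta x (\<lambda>x1 p. sw Delta p (\<lambda>p1 p2.
       sw Delta (S x1) (\<lambda>m n. \<gamma> (m * (p1 * S q1)) (n * (p2 * S q2))))))"
      by (rule sw_swap)
    also have "\<dots> = sw Delta q (\<lambda>q1 q2. eps x * \<gamma> (S q1) (S q2))"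
    proof -
      have "sw Delta x (\<lambda>x1 p. sw Delta p (\<lambda>p1 p2.
       sw Delta (S x1) (\<lambda>m n. \<gamma> (m * (p1 * S q1)) (n * (p2 * S q2))))) = eps x * \<gamma> (S q1) (S q2)" for q1 q2
      proof -
        define \<theta> where "\<theta> s t = \<gamma> (s * S q1) (t * S q2)" for s t
        have bt: "bilin sc \<theta>" unfolding \<theta>_def by (intro bilinI lin_intros li)
        have "sw Delta x (\<lambda>x1 p. sw Delta p (\<lambda>p1 p2.
          sw Delta (S x1) (\<lambda>m n. \<gamma> (m * (p1 * S q1)) (n * (p2 * S q2)))))
          = sw Delta x (\<lambda>x1 p. sw Delta (S x1) (\<lambda>m n. sw Delta p (\<lambda>p1 p2. \<theta> (m * p1) (n * p2))))"
          unfolding \<theta>_def by (subst sw_swap) (simp add: mult.assoc)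
        also have "\<dots> = sw Delta x (\<lambda>x1 p. sw Delta (S x1 * p) \<theta>)"
          by (simp add: Dmult[OF bt])
        also have "\<dots> = sw Delta (sw Delta x (\<lambda>x1 p. S x1 * p)) \<theta>"
          by (rule lin_push[OF lin_D[OF linH_id bilinD[OF bt]], symmetric])
        also have "\<dots> = eps x * \<theta> 1 1"
          by (simp add: antipode1 Dscale[OF bt] Done[OF bt])
        finally show ?thesis by (simp add: \<theta>_def)
      qed
      then show ?thesis by simp
    qed
    also have "\<dots> = eps x * \<Psi> q" by (simp add: \<Psi>_def sw_cmult)
    finally show ?thesis .
  qed
  have "\<Phi> h = \<Psi> h"
  proof -
    have "\<Phi> h = sw Delta h (\<lambda>x q. eps x * \<Psi> q)" using st1 st2 st3 st4 by simp
    also have "\<dots> = \<Psi> (sw Delta h (\<lambda>x q. sc (eps x) q))"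
      by (simp add: lin_push[OF linPsi] linD(2)[OF linPsi])
    also have "\<dots> = \<Psi> h" by (simp add: counit1)
    finally show ?thesis .
  qed
  then show ?thesis by (simp add: \<Phi>_def \<Psi>_def)
qed


lemma eps_S: "eps (S h) = eps h"
proof -
  have lS: "lin (\<lambda>z. eps (S z))" by (intro lin_intros)
  have "eps (S h) = eps (S (sw Delta h (\<lambda>x y. sc (eps y) x)))" by (simp add: counit2)
  also have "\<dots> = sw Delta h (\<lambda>x y. eps (S x) * eps y)"
    by (subst lin_push[OF lS]) (simp add: linD(2)[OF lS] mult.commute)
  also have "\<dots> = eps (sw Delta h (\<lambda>x y. S x * y))"
    by (simp add: lin_push[OF eps_lin] eps_mult)
  also have "\<dots> = eps h" by (simp add: antipode1 eps_sc eps_one)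
  finally show ?thesis .
qed

lemma separate:
  assumes "\<And>\<phi>. lin \<phi> \<Longrightarrow> \<phi> x = \<phi> y"
  shows "x = y"
proof (rule ccontr)
  assume ne: "x \<noteq> y"
  interpret vp: vector_space_pair sc "(*)"
    using VS vs_field by (simp add: vector_space_pair_def)
  define z where "z = x - y"
  have z0: "z \<noteq> 0" using ne by (simp add: z_def)
  have ind: "vp.vs1.independent {z}"
    using z0 by (simp add: vp.vs1.independent_insert vp.vs1.span_empty)
  define \<phi> where "\<phi> = vp.construct {z} (\<lambda>_. 1)"
  have l: "lin \<phi>" unfolding \<phi>_def by (rule vp.linear_construct[OF ind])
  have "\<phi> z = 1" unfolding \<phi>_def by (rule vp.construct_basis[OF ind]) simp
  moreover have "\<phi> x = \<phi> z + \<phi> y" using linD(1)[OF l, of z y] by (simp add: z_def)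
  ultimately show False using assms[OF l] by simp
qed

end


locale rbs = hopf sc Delta eps S
  for sc :: "'f::field \<Rightarrow> 'h::ring_1 \<Rightarrow> 'h" and Delta eps S +
  fixes B1 B2 :: "'h \<Rightarrow> 'h"
  assumes R: "rota_baxter_system sc Delta eps S B1 B2"
begin

lemma B1_lin: "linH B1" and B1_D: "bilin sc \<beta> \<Longrightarrow> sw Delta (B1 a) \<beta> = sw Delta a (\<lambda>x y. \<beta> (B1 x) (B1 y))"
  and B1_eps: "eps (B1 a) = eps a"
  and B2_lin: "linH B2" and B2_D: "bilin sc \<beta> \<Longrightarrow> sw Delta (B2 a) \<beta> = sw Delta a (\<lambda>x y. \<beta> (B2 x) (B2 y))"
  and B2_eps: "eps (B2 a) = eps a"
  and B1_one: "B1 1 = 1" and B2_one: "B2 1 = 1"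
  and RB1: "B1 a * B1 b = B1 (sw Delta a (\<lambda>x y. B1 x * b * S (B2 y)))"
  and RB2: "B2 a * B2 b = B2 (sw Delta a (\<lambda>x y. B1 x * b * S (B2 y)))"
  using R unfolding rota_baxter_system_def coalg_hom_def by blast+

lemma linH_B1: "linH L \<Longrightarrow> linH (\<lambda>x. B1 (L x))"
  by (rule linHI) (auto simp: linHD B1_lin)
lemma linH_B2: "linH L \<Longrightarrow> linH (\<lambda>x. B2 (L x))"
  by (rule linHI) (auto simp: linHD B2_lin)

lemmas lin_intros2 = lin_intros linH_B1 linH_B2

abbreviation "\<sigma> \<equiv> rbs_cocycle Delta S B1 B2"

lemma sigma_def: "\<sigma> a = sw Delta a (\<lambda>x y. B1 x * S (B2 y))"
  by (simp add: rbs_cocycle_def)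

lemma B1_sigma: "B1 (\<sigma> a) = B1 a"
  using RB1[of a 1] by (simp add: B1_one sigma_def)

lemma B2_sigma: "B2 (\<sigma> a) = B2 a"
  using RB2[of a 1] by (simp add: B2_one sigma_def)

lemma sigma_push: "lin \<phi> \<Longrightarrow> \<phi> (\<sigma> a) = sw Delta a (\<lambda>x y. \<phi> (B1 x * S (B2 y)))"
  by (simp add: sigma_def lin_push)

lemma sigma_lin: "linH \<sigma>"
proof (rule linHI)
  fix x y
  show "\<sigma> (x + y) = \<sigma> x + \<sigma> y"
  proof (rule separate)
    fix \<phi> assume l: "lin \<phi>"
    have b: "bilin sc (\<lambda>u v. \<phi> (B1 u * S (B2 v)))" by (intro bilinI lin_comp[OF l] lin_intros2)
    show "\<phi> (\<sigma> (x + y)) = \<phi> (\<sigma> x + \<sigma> y)"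
      by (simp add: linD(1)[OF l] sigma_push[OF l] Dadd[OF b])
  qed
next
  fix c x
  show "\<sigma> (sc c x) = sc c (\<sigma> x)"
  proof (rule separate)
    fix \<phi> assume l: "lin \<phi>"
    have b: "bilin sc (\<lambda>u v. \<phi> (B1 u * S (B2 v)))" by (intro bilinI lin_comp[OF l] lin_intros2)
    show "\<phi> (\<sigma> (sc c x)) = \<phi> (sc c (\<sigma> x))"
      by (simp add: linD(2)[OF l] sigma_push[OF l] Dscale[OF b])
  qed
qed

lemma sigma_eps: "eps (\<sigma> a) = eps a"
  by (simp add: sigma_push[OF eps_lin] eps_mult B1_eps B2_eps eps_S eps_sw_counit)

lemma sigma_D:
  assumes b: "bilin sc \<beta>"
  shows "sw Delta (\<sigma> a) \<beta> = sw Delta a (\<lambda>x y. \<beta> (\<sigma> x) (\<sigma> y))"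
proof -
  note li = lin_bil1[OF b] lin_bil2[OF b]
  have lD: "lin (\<lambda>h. sw Delta h \<beta>)" by (intro lin_intros bilinD[OF b])
  have "sw Delta (\<sigma> a) \<beta> = sw Delta a (\<lambda>x y. sw Delta (B1 x * S (B2 y)) \<beta>)"
    by (rule sigma_push[OF lD])
  also have "\<dots> = sw Delta a (\<lambda>x y. sw Delta x (\<lambda>p q. sw Delta y (\<lambda>u v. \<beta> (B1 p * S (B2 u)) (B1 q * S (B2 v)))))"
  proof -
    have "sw Delta (B1 x * S (B2 y)) \<beta> = sw Delta x (\<lambda>p q. sw Delta y (\<lambda>u v. \<beta> (B1 p * S (B2 u)) (B1 q * S (B2 v))))" for x y
    proof -
      have "sw Delta (B1 x * S (B2 y)) \<beta> = sw Delta (B1 x) (\<lambda>p q. sw Delta (S (B2 y)) (\<lambda>u v. \<beta> (p * u) (q * v)))"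
        by (rule Dmult[OF b])
      also have "\<dots> = sw Delta x (\<lambda>p q. sw Delta (S (B2 y)) (\<lambda>u v. \<beta> (B1 p * u) (B1 q * v)))"
        by (rule B1_D) (intro bilinI lin_intros2 li)
      also have "\<dots> = sw Delta x (\<lambda>p q. sw Delta (B2 y) (\<lambda>u v. \<beta> (B1 p * S u) (B1 q * S v)))"
        by (subst DS) (intro bilinI lin_intros2 li, rule refl)
      also have "\<dots> = sw Delta x (\<lambda>p q. sw Delta y (\<lambda>u v. \<beta> (B1 p * S (B2 u)) (B1 q * S (B2 v))))"
        by (subst B2_D) (intro bilinI lin_intros2 li, rule refl)
      finally show ?thesis .
    qed
    then show ?thesis by simp
  qed
  also have "\<dots> = sw Delta a (\<lambda>x y. sw Delta x (\<lambda>p q. sw Delta y (\<lambda>u v. \<beta> (B1 p * S (B2 q)) (B1 u * S (B2 v)))))"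
    by (rule M4) (intro lin_intros2 li)+
  also have "\<dots> = sw Delta a (\<lambda>x y. \<beta> (\<sigma> x) (\<sigma> y))"
  proof -
    have "\<beta> (\<sigma> x) (\<sigma> y) = sw Delta x (\<lambda>p q. sw Delta y (\<lambda>u v. \<beta> (B1 p * S (B2 q)) (B1 u * S (B2 v))))" for x y
      by (subst sigma_push[OF bilinD(2)[OF b]], simp add: sigma_push[OF bilinD(1)[OF b]])
    then show ?thesis by simp
  qed
  finally show ?thesis .
qed

lemma sigma_idem: "\<sigma> (\<sigma> a) = \<sigma> a"
proof (rule separate)
  fix \<phi> assume l: "lin \<phi>"
  have b: "bilin sc (\<lambda>u v. \<phi> (B1 u * S (B2 v)))" by (intro bilinI lin_comp[OF l] lin_intros2)
  show "\<phi> (\<sigma> (\<sigma> a)) = \<phi> (\<sigma> a)"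
    by (simp add: sigma_push[OF l] sigma_D[OF b] B1_sigma B2_sigma)
qed

end

theorem mainTheorem4:
  fixes sc :: "'f::field_char_0 \<Rightarrow> 'h::ring_1 \<Rightarrow> 'h"
    and Delta :: "'h \<Rightarrow> ('h \<times> 'h) list" and eps :: "'h \<Rightarrow> 'f" and S B1 B2 :: "'h \<Rightarrow> 'h"
  assumes "rota_baxter_system sc Delta eps S B1 B2"
  shows "B1 \<circ> rbs_cocycle Delta S B1 B2 = B1 \<and>
         B2 \<circ> rbs_cocycle Delta S B1 B2 = B2 \<and>
         rbs_cocycle Delta S B1 B2 \<circ> rbs_cocycle Delta S B1 B2 = rbs_cocycle Delta S B1 B2 \<and>
         coalg_hom sc Delta eps (rbs_cocycle Delta S B1 B2)"
proof -
  interpret rbs sc Delta eps S B1 B2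
    using assms by (unfold_locales) (auto simp: rota_baxter_system_def)
  show ?thesis
    by (auto simp: fun_eq_iff B1_sigma B2_sigma sigma_idem coalg_hom_def sigma_lin sigma_D sigma_eps)
qed

end
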